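(* Let $1 \leqslant p < 2$ and let $\{X_{n}, \, n \geqslant 1 \}$ be a sequence of identically distributed pairwise positively quadrant dependent random variables. Suppose that $\frac{1}{n^{1/p}}\sum_{k=1}^{n} (X_{k} - c) \to 0$ almost surely for some finite constant $c$, and that \[ \sum_{1 \leqslant k < j < \infty} (kj)^{-1/p}\, G_{X_{k},X_{j}} \big(k^{1/p},j^{1/p} \big) < \infty . \] Then $\sum_{k=1}^{\infty} \mathbb{P} \left\{\lvert X_{1} \rvert > k^{1/p} \right\} < \infty$.
   Context: A sequence $\{X_{n}, \, n \geqslant 1 \}$ of random variables is pairwise positively quadrant dependent (pairwise PQD) if $\mathbb{P}\{X_{k} \leqslant x_{k}, X_{j} \leqslant x_{j}\} - \mathbb{P}\{X_{k} \leqslant x_{k}\}\mathbb{P}\{X_{j} \leqslant x_{j}\} \geqslant 0$ for all reals $x_{k}, x_{j}$ and all positive integers $k \neq j$. For random variables $X_k, X_j$ and $u,v>0$, \[ G_{X_{k},X_{j}}(u,v) := \int_{-v}^{v} \int_{-u}^{u} \big[\mathbb{P} \{X_{k} > x, X_{j} > y \} - \mathbb{P} \{X_{k} > x \} \mathbb{P} \{X_{j} > y \}\big] \, \mathrm{d}x \, \mathrm{d}y . \] *)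

theory Defs
  imports "HOL-Probability.Probability"
begin

definition pairwise_PQD :: "'a measure \<Rightarrow> (nat \<Rightarrow> 'a \<Rightarrow> real) \<Rightarrow> bool" where
  "pairwise_PQD M X \<longleftrightarrow>
     (\<forall>k j xk xj. 1 \<le> k \<longrightarrow> 1 \<le> j \<longrightarrow> k \<noteq> j \<longrightarrow>
        measure M {\<omega>\<in>space M. X k \<omega> \<le> xk \<and> X j \<omega> \<le> xj}
        - measure M {\<omega>\<in>space M. X k \<omega> \<le> xk} * measure M {\<omega>\<in>space M. X j \<omega> \<le> xj} \<ge> 0)"

definition G :: "'a measure \<Rightarrow> ('a \<Rightarrow> real) \<Rightarrow> ('a \<Rightarrow> real) \<Rightarrow> real \<Rightarrow> real \<Rightarrow> real" where
  "G M Xk Xj u v =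
     (LINT z : {-u..u} \<times> {-v..v} | lborel.
        measure M {\<omega>\<in>space M. Xk \<omega> > fst z \<and> Xj \<omega> > snd z}
        - measure M {\<omega>\<in>space M. Xk \<omega> > fst z} * measure M {\<omega>\<in>space M. Xj \<omega> > snd z})"

end

theory Submission
  imports Defs
begin

lemma fub:
  fixes M :: "'a measure" and S :: "'b::euclidean_space set" and P :: "'a \<Rightarrow> 'b \<Rightarrow> bool"
  assumes pM: "prob_space M" and S: "S \<in> sets lborel" and Sfin: "emeasure lborel S < \<infinity>"
    and Pm: "{x \<in> space (M \<Otimes>\<^sub>M lborel). P (fst x) (snd x)} \<in> sets (M \<Otimes>\<^sub>M lborel)"
  shows "(\<integral>\<omega>. measure lborel {z\<in>S. P \<omega> z} \<partial>M)
       = (LINT z:S|lborel. measure M {\<omega>\<in>space M. P \<omega> z})"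
proof -
  interpret prob_space M by (rule pM)
  interpret pp: pair_sigma_finite M "lborel :: 'b measure"
    by (simp add: pair_sigma_finite.intro lborel.sigma_finite_measure_axioms sigma_finite_measure_axioms)
  define Q where "Q = {x \<in> space (M \<Otimes>\<^sub>M lborel). snd x \<in> S \<and> P (fst x) (snd x)}"
  have Q: "Q \<in> sets (M \<Otimes>\<^sub>M lborel)"
  proof -
    have "Q = {x \<in> space (M \<Otimes>\<^sub>M lborel). P (fst x) (snd x)} \<inter> (space M \<times> S)"
      unfolding Q_def by (auto simp: space_pair_measure)
    also have "\<dots> \<in> sets (M \<Otimes>\<^sub>M lborel)" using Pm S by auto
    finally show ?thesis .
  qed
  have Q1: "Pair \<omega> -` Q = {z\<in>S. P \<omega> z}" if "\<omega> \<in> space M" for \<omega>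
    using that by (auto simp: Q_def space_pair_measure)
  have Q2: "(\<lambda>\<omega>. (\<omega>, z)) -` Q = (if z \<in> S then {\<omega>\<in>space M. P \<omega> z} else {})" for z
    by (auto simp: Q_def space_pair_measure)
  have fin1: "emeasure lborel {z\<in>S. P \<omega> z} < \<infinity>" for \<omega>
    using S by (intro le_less_trans[OF emeasure_mono Sfin]) auto
  have m1: "(\<lambda>\<omega>. emeasure lborel (Pair \<omega> -` Q)) \<in> borel_measurable M"
    using pp.measurable_emeasure_Pair1[OF Q] .
  have m1': "(\<lambda>\<omega>. measure lborel {z\<in>S. P \<omega> z}) \<in> borel_measurable M"
  proof -
    have "(\<lambda>\<omega>. enn2real (emeasure lborel (Pair \<omega> -` Q))) \<in> borel_measurable M"
      using m1 by measurable
    then show ?thesis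
      by (rule measurable_cong[THEN iffD1, rotated]) (simp add: Q1 measure_def)
  qed
  have m2: "(\<lambda>z. emeasure M ((\<lambda>\<omega>. (\<omega>, z)) -` Q)) \<in> borel_measurable lborel"
    using pp.measurable_emeasure_Pair2[OF Q] .
  have m2': "(\<lambda>z. indicator S z * measure M {\<omega>\<in>space M. P \<omega> z}) \<in> borel_measurable lborel"
  proof -
    have "(\<lambda>z. enn2real (emeasure M ((\<lambda>\<omega>. (\<omega>, z)) -` Q))) \<in> borel_measurable lborel"
      using m2 by measurable
    then show ?thesis
      by (rule measurable_cong[THEN iffD1, rotated]) (simp add: Q2 measure_def indicator_def)
  qed
  have "(\<integral>\<omega>. measure lborel {z\<in>S. P \<omega> z} \<partial>M)
      = enn2real (\<integral>\<^sup>+\<omega>. ennreal (measure lborel {z\<in>S. P \<omega> z}) \<partial>M)"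
    by (rule integral_eq_nn_integral[OF m1']) auto
  also have "(\<integral>\<^sup>+\<omega>. ennreal (measure lborel {z\<in>S. P \<omega> z}) \<partial>M)
      = (\<integral>\<^sup>+\<omega>. emeasure lborel (Pair \<omega> -` Q) \<partial>M)"
    by (intro nn_integral_cong) (metis Q1 emeasure_eq_ennreal_measure fin1 infinity_ennreal_def less_imp_neq)
  also have "\<dots> = emeasure (M \<Otimes>\<^sub>M lborel) Q"
    by (rule lborel.emeasure_pair_measure_alt[OF Q, symmetric])
  also have "\<dots> = (\<integral>\<^sup>+z. emeasure M ((\<lambda>\<omega>. (\<omega>, z)) -` Q) \<partial>lborel)"
    by (rule pp.emeasure_pair_measure_alt2[OF Q])
  also have "\<dots> = (\<integral>\<^sup>+z. ennreal (indicator S z * measure M {\<omega>\<in>space M. P \<omega> z}) \<partial>lborel)"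
    by (intro nn_integral_cong) (simp add: Q2 emeasure_eq_measure)
  also have "enn2real \<dots> = integral\<^sup>L lborel (\<lambda>z. indicator S z * measure M {\<omega>\<in>space M. P \<omega> z})"
    by (rule integral_eq_nn_integral[OF m2', symmetric]) auto
  finally show ?thesis by (simp add: set_lebesgue_integral_def)
qed

lemma meas_prob:
  fixes M :: "'a measure" and P :: "'a \<Rightarrow> 'b::euclidean_space \<Rightarrow> bool"
  assumes pM: "prob_space M"
    and Pm: "{x \<in> space (M \<Otimes>\<^sub>M lborel). P (fst x) (snd x)} \<in> sets (M \<Otimes>\<^sub>M lborel)"
  shows "(\<lambda>z. measure M {\<omega>\<in>space M. P \<omega> z}) \<in> borel_measurable lborel"
proof -
  interpret prob_space M by (rule pM)
  interpret pp: pair_sigma_finite M "lborel :: 'b measure"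
    by (simp add: pair_sigma_finite.intro lborel.sigma_finite_measure_axioms sigma_finite_measure_axioms)
  have "(\<lambda>z. enn2real (emeasure M ((\<lambda>\<omega>. (\<omega>, z)) -` {x \<in> space (M \<Otimes>\<^sub>M lborel). P (fst x) (snd x)})))
       \<in> borel_measurable lborel"
    using pp.measurable_emeasure_Pair2[OF Pm] by measurable
  then show ?thesis
    by (rule measurable_cong[THEN iffD1, rotated]) (auto simp: measure_def space_pair_measure)
qed

lemma sint_box:
  fixes f :: "'b::euclidean_space \<Rightarrow> real"
  assumes "f \<in> borel_measurable lborel" "\<And>x. \<bar>f x\<bar> \<le> 1"
  shows "set_integrable lborel (cbox a b) f"
  unfolding set_integrable_def
  by (rule integrableI_bounded_set_indicator[where B=1]) (use assms in \<open>auto simp: emeasure_lborel_cbox_eq\<close>)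

lemma int_prod:
  fixes f g :: "real \<Rightarrow> real"
  assumes fm: "f \<in> borel_measurable lborel" and gm: "g \<in> borel_measurable lborel"
    and fb: "\<And>x. \<bar>f x\<bar> \<le> 1" and gb: "\<And>x. \<bar>g x\<bar> \<le> 1"
  shows "(LINT x:{a..b}|lborel. f x) * (LINT y:{c..d}|lborel. g y)
       = (LINT z:{a..b}\<times>{c..d}|lborel. f (fst z) * g (snd z))"
proof -
  have pp: "pair_sigma_finite (lborel :: real measure) (lborel :: real measure)"
    by (simp add: pair_sigma_finite.intro lborel.sigma_finite_measure_axioms)
  let ?h = "\<lambda>z::real\<times>real. indicator ({a..b}\<times>{c..d}) z * (f (fst z) * g (snd z))"
  have hm: "?h \<in> borel_measurable (lborel \<Otimes>\<^sub>M lborel)"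
    using fm gm by measurable
  have "integrable (lborel \<Otimes>\<^sub>M lborel) ?h"
  proof -
    have pm: "(\<lambda>z::real\<times>real. f (fst z) * g (snd z)) \<in> borel_measurable lborel"
    proof -
      have "(\<lambda>z::real\<times>real. f (fst z) * g (snd z)) \<in> borel_measurable (lborel \<Otimes>\<^sub>M lborel)"
        using fm gm by measurable
      then show ?thesis by (simp add: lborel_prod)
    qed
    have "set_integrable lborel (cbox (a,c) (b,d)) (\<lambda>z::real\<times>real. f (fst z) * g (snd z))"
      by (rule sint_box[OF pm]) (use fb gb in \<open>auto simp: abs_mult intro: mult_le_one\<close>)
    moreover have "cbox (a,c) (b,d) = {a..b}\<times>{c..d}" by (simp add: cbox_Pair_eq)
    ultimately show ?thesis by (simp add: set_integrable_def lborel_prod)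
  qed
  then have "(\<integral>x. (\<integral>y. ?h (x,y) \<partial>lborel) \<partial>lborel) = integral\<^sup>L (lborel \<Otimes>\<^sub>M lborel) ?h"
    by (rule pair_sigma_finite.integral_fst'[OF pp])
  also have "\<dots> = (LINT z:{a..b}\<times>{c..d}|lborel. f (fst z) * g (snd z))"
    by (simp add: lborel_prod set_lebesgue_integral_def)
  finally have eq: "(\<integral>x. (\<integral>y. ?h (x,y) \<partial>lborel) \<partial>lborel) = (LINT z:{a..b}\<times>{c..d}|lborel. f (fst z) * g (snd z))" .
  have "(\<integral>x. (\<integral>y. ?h (x,y) \<partial>lborel) \<partial>lborel)
      = (\<integral>x. (indicator {a..b} x * f x) * (\<integral>y. indicator {c..d} y * g y \<partial>lborel) \<partial>lborel)"
  proof (rule Bochner_Integration.integral_cong[OF refl])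
    fix x :: real
    show "(\<integral>y. ?h (x,y) \<partial>lborel) = (indicator {a..b} x * f x) * (\<integral>y. indicator {c..d} y * g y \<partial>lborel)"
      unfolding integral_mult_right_zero[symmetric]
      by (rule Bochner_Integration.integral_cong[OF refl]) (simp add: indicator_times mult_ac)
  qed
  also have "\<dots> = (LINT x:{a..b}|lborel. f x) * (LINT y:{c..d}|lborel. g y)"
    by (simp add: set_lebesgue_integral_def integral_mult_left_zero)
  finally show ?thesis using eq by simp
qed

lemma cov_repr:
  fixes M :: "'a measure" and U V :: "'a \<Rightarrow> real" and R1 R2 :: "real \<Rightarrow> real \<Rightarrow> bool"
  assumes pM: "prob_space M" and Um[measurable]: "U \<in> borel_measurable M" and Vm[measurable]: "V \<in> borel_measurable M"
    and R1: "Measurable.pred (borel \<Otimes>\<^sub>M borel) (\<lambda>p. R1 (fst p) (snd p))"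
    and R2: "Measurable.pred (borel \<Otimes>\<^sub>M borel) (\<lambda>p. R2 (fst p) (snd p))"
  shows "(\<integral>\<omega>. measure lborel {x\<in>{a..b}. R1 (U \<omega>) x} * measure lborel {y\<in>{c..d}. R2 (V \<omega>) y} \<partial>M)
       - (\<integral>\<omega>. measure lborel {x\<in>{a..b}. R1 (U \<omega>) x} \<partial>M) * (\<integral>\<omega>. measure lborel {y\<in>{c..d}. R2 (V \<omega>) y} \<partial>M)
     = (LINT z:{a..b}\<times>{c..d}|lborel. measure M {\<omega>\<in>space M. R1 (U \<omega>) (fst z) \<and> R2 (V \<omega>) (snd z)}
            - measure M {\<omega>\<in>space M. R1 (U \<omega>) (fst z)} * measure M {\<omega>\<in>space M. R2 (V \<omega>) (snd z)})"
proof -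
  interpret prob_space M by (rule pM)
  have R1c: "Measurable.pred N (\<lambda>x. R1 (f x) (g x))"
    if "f \<in> borel_measurable N" "g \<in> borel_measurable N" for N :: "'c measure" and f g
    using measurable_compose[OF measurable_Pair[OF that] R1] by simp
  have R2c: "Measurable.pred N (\<lambda>x. R2 (f x) (g x))"
    if "f \<in> borel_measurable N" "g \<in> borel_measurable N" for N :: "'c measure" and f g
    using measurable_compose[OF measurable_Pair[OF that] R2] by simp
  have s1: "{x\<in>{a..b}. R1 u x} \<in> sets lborel" for u
  proof -
    have "Measurable.pred lborel (\<lambda>x. R1 u x)" by (rule R1c) auto
    then have "{x\<in>space lborel. R1 u x} \<in> sets lborel" by (rule predE)
    then have "{x\<in>space lborel. R1 u x} \<inter> {a..b} \<in> sets lborel" by auto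
    moreover have "{x\<in>space lborel. R1 u x} \<inter> {a..b} = {x\<in>{a..b}. R1 u x}" by auto
    ultimately show ?thesis by simp
  qed
  have s2: "{x\<in>{c..d}. R2 u x} \<in> sets lborel" for u
  proof -
    have "Measurable.pred lborel (\<lambda>x. R2 u x)" by (rule R2c) auto
    then have "{x\<in>space lborel. R2 u x} \<in> sets lborel" by (rule predE)
    then have "{x\<in>space lborel. R2 u x} \<inter> {c..d} \<in> sets lborel" by auto
    moreover have "{x\<in>space lborel. R2 u x} \<inter> {c..d} = {x\<in>{c..d}. R2 u x}" by auto
    ultimately show ?thesis by simp
  qed
  have prodm: "measure lborel {x\<in>{a..b}. R1 u x} * measure lborel {y\<in>{c..d}. R2 v y}
      = measure lborel {z\<in>{a..b}\<times>{c..d}. R1 u (fst z) \<and> R2 v (snd z)}" for u v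
  proof -
    have "{z\<in>{a..b}\<times>{c..d}. R1 u (fst z) \<and> R2 v (snd z)} = {x\<in>{a..b}. R1 u x} \<times> {y\<in>{c..d}. R2 v y}"
      by auto
    then have "measure lborel {z\<in>{a..b}\<times>{c..d}. R1 u (fst z) \<and> R2 v (snd z)}
        = measure (lborel \<Otimes>\<^sub>M lborel) ({x\<in>{a..b}. R1 u x} \<times> {y\<in>{c..d}. R2 v y})"
      by (simp add: lborel_prod)
    also have "\<dots> = measure lborel {x\<in>{a..b}. R1 u x} * measure lborel {y\<in>{c..d}. R2 v y}"
      unfolding measure_def lborel.emeasure_pair_measure_Times[OF s1 s2] by (rule enn2real_mult)
    finally show ?thesis by simp
  qed
  have P12: "{x \<in> space (M \<Otimes>\<^sub>M (lborel :: (real\<times>real) measure)). R1 (U (fst x)) (fst (snd x)) \<and> R2 (V (fst x)) (snd (snd x))}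
      \<in> sets (M \<Otimes>\<^sub>M lborel)"
  proof (rule predE, intro pred_intros_logic)
    show "Measurable.pred (M \<Otimes>\<^sub>M (lborel :: (real\<times>real) measure)) (\<lambda>x. R1 (U (fst x)) (fst (snd x)))"
      unfolding lborel_prod[symmetric] by (rule R1c) measurable
    show "Measurable.pred (M \<Otimes>\<^sub>M (lborel :: (real\<times>real) measure)) (\<lambda>x. R2 (V (fst x)) (snd (snd x)))"
      unfolding lborel_prod[symmetric] by (rule R2c) measurable
  qed
  have P1: "{x \<in> space (M \<Otimes>\<^sub>M (lborel :: real measure)). R1 (U (fst x)) (snd x)} \<in> sets (M \<Otimes>\<^sub>M lborel)"
    by (rule predE, rule R1c) measurable
  have P2: "{x \<in> space (M \<Otimes>\<^sub>M (lborel :: real measure)). R2 (V (fst x)) (snd x)} \<in> sets (M \<Otimes>\<^sub>M lborel)"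
    by (rule predE, rule R2c) measurable
  have box: "{a..b}\<times>{c..d} = cbox (a,c) (b,d)" by (simp add: cbox_Pair_eq)
  have E12: "(\<integral>\<omega>. measure lborel {x\<in>{a..b}. R1 (U \<omega>) x} * measure lborel {y\<in>{c..d}. R2 (V \<omega>) y} \<partial>M)
     = (LINT z:{a..b}\<times>{c..d}|lborel. measure M {\<omega>\<in>space M. R1 (U \<omega>) (fst z) \<and> R2 (V \<omega>) (snd z)})"
    unfolding prodm
    by (rule fub[OF pM _ _ P12]) (simp_all only: box emeasure_lborel_cbox_eq, auto)
  have E1: "(\<integral>\<omega>. measure lborel {x\<in>{a..b}. R1 (U \<omega>) x} \<partial>M)
     = (LINT x:{a..b}|lborel. measure M {\<omega>\<in>space M. R1 (U \<omega>) x})"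
    by (rule fub[OF pM _ _ P1]) (auto simp: emeasure_lborel_Icc_eq)
  have E2: "(\<integral>\<omega>. measure lborel {x\<in>{c..d}. R2 (V \<omega>) x} \<partial>M)
     = (LINT x:{c..d}|lborel. measure M {\<omega>\<in>space M. R2 (V \<omega>) x})"
    by (rule fub[OF pM _ _ P2]) (auto simp: emeasure_lborel_Icc_eq)
  have m1: "(\<lambda>x. measure M {\<omega>\<in>space M. R1 (U \<omega>) x}) \<in> borel_measurable lborel"
    using meas_prob[OF pM, of "\<lambda>\<omega> x. R1 (U \<omega>) x"] P1 by simp
  have m2: "(\<lambda>x. measure M {\<omega>\<in>space M. R2 (V \<omega>) x}) \<in> borel_measurable lborel"
    using meas_prob[OF pM, of "\<lambda>\<omega> x. R2 (V \<omega>) x"] P2 by simp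
  have m12: "(\<lambda>z. measure M {\<omega>\<in>space M. R1 (U \<omega>) (fst z) \<and> R2 (V \<omega>) (snd z)}) \<in> borel_measurable lborel"
    using meas_prob[OF pM, of "\<lambda>\<omega> z. R1 (U \<omega>) (fst z) \<and> R2 (V \<omega>) (snd z)"] P12 by simp
  have EE: "(LINT x:{a..b}|lborel. measure M {\<omega>\<in>space M. R1 (U \<omega>) x}) * (LINT x:{c..d}|lborel. measure M {\<omega>\<in>space M. R2 (V \<omega>) x})
     = (LINT z:{a..b}\<times>{c..d}|lborel. measure M {\<omega>\<in>space M. R1 (U \<omega>) (fst z)} * measure M {\<omega>\<in>space M. R2 (V \<omega>) (snd z)})"
    by (rule int_prod[OF m1 m2]) auto
  have pm: "(\<lambda>z::real\<times>real. measure M {\<omega>\<in>space M. R1 (U \<omega>) (fst z)} * measure M {\<omega>\<in>space M. R2 (V \<omega>) (snd z)}) \<in> borel_measurable lborel"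
  proof -
    have "(\<lambda>z::real\<times>real. measure M {\<omega>\<in>space M. R1 (U \<omega>) (fst z)} * measure M {\<omega>\<in>space M. R2 (V \<omega>) (snd z)}) \<in> borel_measurable (lborel \<Otimes>\<^sub>M lborel)"
      using m1 m2 by measurable
    then show ?thesis by (simp add: lborel_prod)
  qed
  have i1: "set_integrable lborel ({a..b}\<times>{c..d}) (\<lambda>z. measure M {\<omega>\<in>space M. R1 (U \<omega>) (fst z) \<and> R2 (V \<omega>) (snd z)})"
    unfolding box by (rule sint_box[OF m12]) auto
  have i2: "set_integrable lborel ({a..b}\<times>{c..d}) (\<lambda>z::real\<times>real. measure M {\<omega>\<in>space M. R1 (U \<omega>) (fst z)} * measure M {\<omega>\<in>space M. R2 (V \<omega>) (snd z)})"
    unfolding box by (rule sint_box[OF pm]) (auto simp: abs_mult intro: mult_le_one)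
  show ?thesis
    unfolding E12 E1 E2 EE set_integral_diff(2)[OF i1 i2] ..
qed

lemma sym_sum:
  fixes c :: "nat \<Rightarrow> nat \<Rightarrow> real"
  assumes "\<And>k j. c k j = c j k"
  shows "(\<Sum>k<n. \<Sum>j<n. c k j) = (\<Sum>k<n. c k k) + 2 * (\<Sum>j<n. \<Sum>k<j. c k j)"
proof (induction n)
  case 0 then show ?case by simp
next
  case (Suc n)
  have "(\<Sum>k<Suc n. \<Sum>j<Suc n. c k j) = (\<Sum>k<n. \<Sum>j<n. c k j) + (\<Sum>k<n. c k n) + (\<Sum>j<n. c n j) + c n n"
    by (simp add: sum.distrib)
  also have "(\<Sum>j<n. c n j) = (\<Sum>k<n. c k n)" using assms by simp
  finally show ?case using Suc by simp
qed

lemma bc2: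
  fixes M :: "'a measure" and Z :: "nat \<Rightarrow> 'a \<Rightarrow> real" and C :: real
  assumes pM: "prob_space M"
    and Zm[measurable]: "\<And>k. Z k \<in> borel_measurable M"
    and Zb: "\<And>k \<omega>. \<omega> \<in> space M \<Longrightarrow> 0 \<le> Z k \<omega> \<and> Z k \<omega> \<le> 1"
    and ns: "\<not> summable (\<lambda>k. (\<integral>\<omega>. Z k \<omega> \<partial>M))"
    and Cb: "\<And>n. (\<Sum>j<n. \<Sum>k<j. (\<integral>\<omega>. Z k \<omega> * Z j \<omega> \<partial>M) - (\<integral>\<omega>. Z k \<omega> \<partial>M) * (\<integral>\<omega>. Z j \<omega> \<partial>M)) \<le> C"
    and ae: "AE \<omega> in M. \<exists>m. \<forall>k\<ge>m. Z k \<omega> = 0"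
  shows False
proof -
  interpret prob_space M by (rule pM)
  define e where "e k = (\<integral>\<omega>. Z k \<omega> \<partial>M)" for k
  define \<mu> where "\<mu> n = (\<Sum>k<n. e k)" for n
  define T where "T n \<omega> = (\<Sum>k<n. Z k \<omega>)" for n \<omega>
  have intZ: "integrable M (Z k)" for k
    by (rule integrable_const_bound[where B=1]) (use Zb in auto)
  have intZZ: "integrable M (\<lambda>\<omega>. Z k \<omega> * Z j \<omega>)" for k j
    by (rule integrable_const_bound[where B=1]) (use Zb in \<open>auto intro: mult_le_one\<close>)
  have e0: "0 \<le> e k" for k
    unfolding e_def by (rule integral_nonneg_AE) (use Zb in auto)
  have unb: "\<exists>n. K \<le> \<mu> n" for K
  proof (rule ccontr)
    assume "\<not> ?thesis"
    then have "\<forall>n. \<mu> n \<le> K" by (meson linear)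
    then have "summable e"
      by (intro summableI_nonneg_bounded[where x=K]) (auto simp: e0 \<mu>_def)
    moreover have "e = (\<lambda>k. \<integral>\<omega>. Z k \<omega> \<partial>M)" by (simp add: fun_eq_iff e_def)
    ultimately show False using ns by simp
  qed
  have var: "(\<integral>\<omega>. (T n \<omega> - \<mu> n)^2 \<partial>M) \<le> \<mu> n + 2 * C" for n
  proof -
    define c where "c k j = (\<integral>\<omega>. Z k \<omega> * Z j \<omega> \<partial>M) - e k * e j" for k j
    have csym: "c k j = c j k" for k j by (simp add: c_def mult.commute)
    have ckk: "c k k \<le> e k" for k
    proof -
      have "(\<integral>\<omega>. Z k \<omega> * Z k \<omega> \<partial>M) \<le> e k"
        unfolding e_def
        by (rule integral_mono[OF intZZ intZ]) (use Zb in \<open>auto intro: mult_left_le_one_le\<close>)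
      moreover have "0 \<le> e k * e k" using e0 by simp
      ultimately show ?thesis unfolding c_def by linarith
    qed
    have intT: "integrable M (T n)" unfolding T_def using intZ by auto
    have "(\<lambda>\<omega>. (T n \<omega> - \<mu> n)^2) = (\<lambda>\<omega>. (\<Sum>k<n. \<Sum>j<n. Z k \<omega> * Z j \<omega>) - 2 * \<mu> n * T n \<omega> + \<mu> n ^ 2)"
      by (auto simp: T_def power2_eq_square sum_product algebra_simps)
    then have "(\<integral>\<omega>. (T n \<omega> - \<mu> n)^2 \<partial>M)
        = (\<Sum>k<n. \<Sum>j<n. (\<integral>\<omega>. Z k \<omega> * Z j \<omega> \<partial>M)) - 2 * \<mu> n * (\<integral>\<omega>. T n \<omega> \<partial>M) + \<mu> n ^ 2"
      using intT intZZ by (simp add: Bochner_Integration.integral_sum prob_space)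
    also have "(\<integral>\<omega>. T n \<omega> \<partial>M) = \<mu> n"
      unfolding T_def \<mu>_def e_def using intZ by (simp add: Bochner_Integration.integral_sum)
    finally have v1: "(\<integral>\<omega>. (T n \<omega> - \<mu> n)^2 \<partial>M) = (\<Sum>k<n. \<Sum>j<n. (\<integral>\<omega>. Z k \<omega> * Z j \<omega> \<partial>M)) - \<mu> n ^ 2"
      by (simp add: power2_eq_square)
    have v2: "\<mu> n ^ 2 = (\<Sum>k<n. \<Sum>j<n. e k * e j)"
      by (simp add: \<mu>_def power2_eq_square sum_product)
    have "(\<integral>\<omega>. (T n \<omega> - \<mu> n)^2 \<partial>M) = (\<Sum>k<n. \<Sum>j<n. c k j)"
      unfolding v1 v2 c_def by (simp add: sum_subtractf)
    also have "\<dots> = (\<Sum>k<n. c k k) + 2 * (\<Sum>j<n. \<Sum>k<j. c k j)"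
      by (rule sym_sum[OF csym])
    also have "(\<Sum>k<n. c k k) \<le> \<mu> n" unfolding \<mu>_def by (rule sum_mono[OF ckk])
    also have "(\<Sum>j<n. \<Sum>k<j. c k j) \<le> C" using Cb[of n] by (simp add: c_def e_def)
    finally show ?thesis by simp
  qed
  define E where "E m = {\<omega>\<in>space M. \<forall>k\<ge>m. Z k \<omega> = 0}" for m
  have Esets: "E m \<in> sets M" for m unfolding E_def by measurable
  have Einc: "incseq E" unfolding incseq_def E_def by auto
  have half: "measure M (E m) \<le> 1/2" for m
  proof -
    obtain n where n: "max (2 * real m) (9 + 16 * \<bar>C\<bar>) \<le> \<mu> n" using unb by blast
    have mu1: "9 + 16 * \<bar>C\<bar> \<le> \<mu> n" "2 * real m \<le> \<mu> n" using n by auto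
    have mupos: "0 < \<mu> n" using mu1 by linarith
    have Tle: "T n \<omega> \<le> real m" if "\<omega> \<in> E m" for \<omega>
    proof -
      have "T n \<omega> \<le> (\<Sum>k<n. if k < m then 1 else 0)"
        unfolding T_def using that by (intro sum_mono) (auto simp: E_def Zb not_less)
      also have "\<dots> = real (card ({..<n} \<inter> {k. k < m}))"
        by (simp add: sum.If_cases)
      also have "\<dots> \<le> real m"
      proof -
        have "{..<n} \<inter> {k. k < m} \<subseteq> {..<m}" by auto
        then show ?thesis using card_mono[of "{..<m}"] by fastforce
      qed
      finally show ?thesis .
    qed
    have sub: "E m \<subseteq> {\<omega>\<in>space M. \<bar>T n \<omega> - \<mu> n\<bar> \<ge> \<mu> n / 2}"
    proof
      fix \<omega> assume w: "\<omega> \<in> E m"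
      then have "\<omega> \<in> space M" by (simp add: E_def)
      moreover have "T n \<omega> \<le> real m" using Tle w .
      ultimately show "\<omega> \<in> {\<omega>\<in>space M. \<bar>T n \<omega> - \<mu> n\<bar> \<ge> \<mu> n / 2}" using mu1 by auto
    qed
    have Tm[measurable]: "T n \<in> borel_measurable M" unfolding T_def by measurable
    have intT2: "integrable M (\<lambda>\<omega>. (T n \<omega> - \<mu> n)^2)"
    proof (rule integrable_const_bound[where B="(real n + \<mu> n)^2"])
      show "AE \<omega> in M. norm ((T n \<omega> - \<mu> n)^2) \<le> (real n + \<mu> n)^2"
      proof (rule AE_I2)
        fix \<omega> assume w: "\<omega> \<in> space M"
        have "0 \<le> T n \<omega>" unfolding T_def using Zb[OF w] by (intro sum_nonneg) auto
        moreover have "T n \<omega> \<le> real n" unfolding T_def using Zb[OF w]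
          using sum_mono[of "{..<n}" "\<lambda>k. Z k \<omega>" "\<lambda>k. 1"] by auto
        ultimately have "\<bar>T n \<omega> - \<mu> n\<bar> \<le> \<bar>real n + \<mu> n\<bar>" using mupos by linarith
        then show "norm ((T n \<omega> - \<mu> n)^2) \<le> (real n + \<mu> n)^2"
          by (simp only: abs_le_square_iff real_norm_def abs_power2)
      qed
    qed measurable
    have "measure M (E m) \<le> measure M {\<omega>\<in>space M. \<bar>T n \<omega> - \<mu> n\<bar> \<ge> \<mu> n / 2}"
      by (rule finite_measure_mono[OF sub]) measurable
    also have "\<dots> \<le> (\<integral>\<omega>. (T n \<omega> - \<mu> n)^2 \<partial>M) / (\<mu> n / 2)^2"
      by (rule second_moment_method) (use intT2 mupos in auto)
    also have "\<dots> \<le> (\<mu> n + 2 * C) / (\<mu> n / 2)^2"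
      by (rule divide_right_mono[OF var]) simp
    also have "\<dots> \<le> 1/2"
    proof -
      have A: "9 * \<mu> n + 16 * (\<bar>C\<bar> * \<mu> n) \<le> \<mu> n * \<mu> n"
        using mult_left_mono[OF mu1(1), of "\<mu> n"] mupos by (simp add: algebra_simps)
      have B: "\<bar>C\<bar> \<le> \<bar>C\<bar> * \<mu> n"
        using mult_left_mono[of 1 "\<mu> n" "\<bar>C\<bar>"] mu1 by simp
      have "8 * \<mu> n + 16 * C \<le> \<mu> n * \<mu> n"
        using A B mupos abs_ge_self[of C] by linarith
      moreover have "(\<mu> n / 2)^2 = \<mu> n * \<mu> n / 4" by (simp add: power2_eq_square)
      ultimately show ?thesis using mupos
        by (subst pos_divide_le_eq) auto
    qed
    finally show ?thesis .
  qed
  have lim: "(\<lambda>m. measure M (E m)) \<longlonglongrightarrow> measure M (\<Union>m. E m)"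
    by (rule finite_Lim_measure_incseq) (use Esets Einc in auto)
  have U: "(\<Union>m. E m) \<in> events" using Esets by auto
  have "AE \<omega> in M. \<omega> \<in> (\<Union>m. E m)"
    using ae AE_space by eventually_elim (auto simp: E_def)
  then have one: "measure M (\<Union>m. E m) = 1"
    using AE_in_set_eq_1[OF U] by simp
  have "measure M (\<Union>m. E m) \<le> 1/2"
    by (rule LIMSEQ_le_const2[OF lim]) (use half in auto)
  with one show False by simp
qed

lemma mlb_Icc: "a \<le> b \<Longrightarrow> measure lborel {a..b::real} = b - a"
  by (simp add: measure_def)

lemma mlb_Ico: "a \<le> b \<Longrightarrow> measure lborel {a..<b::real} = b - a"
  by (simp add: measure_def)

lemma meas_gt:
  fixes a b u :: real
  assumes "a \<le> b"
  shows "measure lborel {x\<in>{a..b}. u > x} = min (b-a) (max 0 (u-a))"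
proof (cases "u \<le> a")
  case True
  have e: "{x\<in>{a..b}. u > x} = {}" using True by auto
  show ?thesis unfolding e using True assms by simp
next
  case False
  show ?thesis
  proof (cases "u \<le> b")
    case True
    have e: "{x\<in>{a..b}. u > x} = {a..<u}" using True False by auto
    show ?thesis unfolding e using True False by (simp add: mlb_Ico)
  next
    case F2: False
    have e: "{x\<in>{a..b}. u > x} = {a..b}" using F2 False by auto
    show ?thesis unfolding e using F2 False assms by (simp add: mlb_Icc)
  qed
qed

lemma meas_le:
  fixes a b u :: real
  assumes "a \<le> b"
  shows "measure lborel {x\<in>{-b..-a}. u \<le> x} = min (b-a) (max 0 (-a-u))"
proof (cases "u > -a")
  case True
  have e: "{x\<in>{-b..-a}. u \<le> x} = {}" using True by auto
  show ?thesis unfolding e using True assms by simp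
next
  case False
  show ?thesis
  proof (cases "u \<ge> -b")
    case True
    have e: "{x\<in>{-b..-a}. u \<le> x} = {u..-a}" using True False by auto
    show ?thesis unfolding e using True False by (simp add: mlb_Icc)
  next
    case F2: False
    have e: "{x\<in>{-b..-a}. u \<le> x} = {-b..-a}" using F2 False by auto
    show ?thesis unfolding e using F2 False assms by (simp add: mlb_Icc)
  qed
qed

lemma pqd_ident:
  fixes M :: "'a measure" and U V :: "'a \<Rightarrow> real"
  assumes pM: "prob_space M" and [measurable]: "U \<in> borel_measurable M" "V \<in> borel_measurable M"
  shows "measure M {\<omega>\<in>space M. U \<omega> > x \<and> V \<omega> > y} - measure M {\<omega>\<in>space M. U \<omega> > x} * measure M {\<omega>\<in>space M. V \<omega> > y}
       = measure M {\<omega>\<in>space M. U \<omega> \<le> x \<and> V \<omega> \<le> y} - measure M {\<omega>\<in>space M. U \<omega> \<le> x} * measure M {\<omega>\<in>space M. V \<omega> \<le> y}"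
proof -
  interpret prob_space M by (rule pM)
  let ?A = "{\<omega>\<in>space M. U \<omega> \<le> x}" and ?B = "{\<omega>\<in>space M. V \<omega> \<le> y}"
  have A: "?A \<in> events" and B: "?B \<in> events" by measurable
  have c1: "{\<omega>\<in>space M. U \<omega> > x} = space M - ?A" by auto
  have c2: "{\<omega>\<in>space M. V \<omega> > y} = space M - ?B" by auto
  have c3: "{\<omega>\<in>space M. U \<omega> > x \<and> V \<omega> > y} = space M - (?A \<union> ?B)" by auto
  have c4: "{\<omega>\<in>space M. U \<omega> \<le> x \<and> V \<omega> \<le> y} = ?A \<inter> ?B" by auto
  have u: "measure M (?A \<union> ?B) = measure M ?A + measure M ?B - measure M (?A \<inter> ?B)"
    by (rule measure_Un3) (use A B in \<open>auto simp: fmeasurable_def less_top[symmetric]\<close>)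
  show ?thesis
    unfolding c1 c2 c3 c4
    using A B u by (simp add: finite_measure_compl prob_space algebra_simps)
qed

lemma Hm:
  fixes M :: "'a measure" and U V :: "'a \<Rightarrow> real" and R1 R2 :: "real \<Rightarrow> real \<Rightarrow> bool"
  assumes pM: "prob_space M" and Um[measurable]: "U \<in> borel_measurable M" and Vm[measurable]: "V \<in> borel_measurable M"
    and R1: "Measurable.pred (borel \<Otimes>\<^sub>M borel) (\<lambda>p. R1 (fst p) (snd p))"
    and R2: "Measurable.pred (borel \<Otimes>\<^sub>M borel) (\<lambda>p. R2 (fst p) (snd p))"
  shows "(\<lambda>z. measure M {\<omega>\<in>space M. R1 (U \<omega>) (fst z) \<and> R2 (V \<omega>) (snd z)}
            - measure M {\<omega>\<in>space M. R1 (U \<omega>) (fst z)} * measure M {\<omega>\<in>space M. R2 (V \<omega>) (snd z)}) \<in> borel_measurable lborel"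
proof -
  have R1c: "Measurable.pred N (\<lambda>x. R1 (f x) (g x))"
    if "f \<in> borel_measurable N" "g \<in> borel_measurable N" for N :: "'c measure" and f g
    using measurable_compose[OF measurable_Pair[OF that] R1] by simp
  have R2c: "Measurable.pred N (\<lambda>x. R2 (f x) (g x))"
    if "f \<in> borel_measurable N" "g \<in> borel_measurable N" for N :: "'c measure" and f g
    using measurable_compose[OF measurable_Pair[OF that] R2] by simp
  have P12: "{x \<in> space (M \<Otimes>\<^sub>M (lborel :: (real\<times>real) measure)). R1 (U (fst x)) (fst (snd x)) \<and> R2 (V (fst x)) (snd (snd x))}
      \<in> sets (M \<Otimes>\<^sub>M lborel)"
  proof (rule predE, intro pred_intros_logic)
    show "Measurable.pred (M \<Otimes>\<^sub>M (lborel :: (real\<times>real) measure)) (\<lambda>x. R1 (U (fst x)) (fst (snd x)))"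
      unfolding lborel_prod[symmetric] by (rule R1c) measurable
    show "Measurable.pred (M \<Otimes>\<^sub>M (lborel :: (real\<times>real) measure)) (\<lambda>x. R2 (V (fst x)) (snd (snd x)))"
      unfolding lborel_prod[symmetric] by (rule R2c) measurable
  qed
  have P1: "{x \<in> space (M \<Otimes>\<^sub>M (lborel :: real measure)). R1 (U (fst x)) (snd x)} \<in> sets (M \<Otimes>\<^sub>M lborel)"
    by (rule predE, rule R1c) measurable
  have P2: "{x \<in> space (M \<Otimes>\<^sub>M (lborel :: real measure)). R2 (V (fst x)) (snd x)} \<in> sets (M \<Otimes>\<^sub>M lborel)"
    by (rule predE, rule R2c) measurable
  have m1: "(\<lambda>x. measure M {\<omega>\<in>space M. R1 (U \<omega>) x}) \<in> borel_measurable lborel"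
    using meas_prob[OF pM, of "\<lambda>\<omega> x. R1 (U \<omega>) x"] P1 by simp
  have m2: "(\<lambda>x. measure M {\<omega>\<in>space M. R2 (V \<omega>) x}) \<in> borel_measurable lborel"
    using meas_prob[OF pM, of "\<lambda>\<omega> x. R2 (V \<omega>) x"] P2 by simp
  have m12: "(\<lambda>z. measure M {\<omega>\<in>space M. R1 (U \<omega>) (fst z) \<and> R2 (V \<omega>) (snd z)}) \<in> borel_measurable lborel"
    using meas_prob[OF pM, of "\<lambda>\<omega> z. R1 (U \<omega>) (fst z) \<and> R2 (V \<omega>) (snd z)"] P12 by simp
  have pm: "(\<lambda>z::real\<times>real. measure M {\<omega>\<in>space M. R1 (U \<omega>) (fst z)} * measure M {\<omega>\<in>space M. R2 (V \<omega>) (snd z)}) \<in> borel_measurable lborel"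
  proof -
    have "(\<lambda>z::real\<times>real. measure M {\<omega>\<in>space M. R1 (U \<omega>) (fst z)} * measure M {\<omega>\<in>space M. R2 (V \<omega>) (snd z)}) \<in> borel_measurable (lborel \<Otimes>\<^sub>M lborel)"
      using m1 m2 by measurable
    then show ?thesis by (simp add: lborel_prod)
  qed
  show ?thesis using m12 pm by measurable
qed

lemma box_mono:
  fixes f :: "real \<times> real \<Rightarrow> real"
  assumes fm: "f \<in> borel_measurable lborel" and fb: "\<And>z. \<bar>f z\<bar> \<le> 1"
    and sub: "{a..b} \<times> {c..d} \<subseteq> {a'..b'} \<times> {c'..d'}"
    and nn: "\<And>z. z \<in> {a'..b'} \<times> {c'..d'} \<Longrightarrow> 0 \<le> f z"
  shows "(LINT z:{a..b}\<times>{c..d}|lborel. f z) \<le> (LINT z:{a'..b'}\<times>{c'..d'}|lborel. f z)"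
proof -
  have i1: "set_integrable lborel ({a..b}\<times>{c..d}) f"
    using sint_box[OF fm fb, of "(a,c)" "(b,d)"] by (simp add: cbox_Pair_eq)
  have i2: "set_integrable lborel ({a'..b'}\<times>{c'..d'}) f"
    using sint_box[OF fm fb, of "(a',c')" "(b',d')"] by (simp add: cbox_Pair_eq)
  show ?thesis
    unfolding set_lebesgue_integral_def
    by (rule integral_mono[OF i1[unfolded set_integrable_def] i2[unfolded set_integrable_def]])
       (use sub nn in \<open>auto split: split_indicator\<close>)
qed

lemma conv:
  fixes x :: "nat \<Rightarrow> real" and c s :: real
  assumes s: "0 < s" and lim: "(\<lambda>n. (\<Sum>k=1..n. (x k - c)) / real n powr s) \<longlonglongrightarrow> 0"
  shows "\<exists>m. \<forall>k\<ge>m. \<bar>x k\<bar> < real k powr s / 2"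
proof -
  define S where "S n = (\<Sum>k=1..n. (x k - c))" for n
  obtain N where N: "\<And>n. n \<ge> N \<Longrightarrow> \<bar>S n / real n powr s\<bar> < 1/8"
    using LIMSEQ_D[OF lim, of "1/8"] unfolding S_def by auto
  obtain N2 :: nat where N2: "(8*\<bar>c\<bar>+1) powr (1/s) \<le> real N2"
    using real_arch_simple by blast
  have "\<bar>x n\<bar> < real n powr s / 2" if n: "n \<ge> max (N+1) (max N2 2)" for n
  proof -
    obtain n' where n': "n = Suc n'" using n by (cases n) auto
    have n'1: "n' \<ge> 1" "n' \<ge> N" using n n' by auto
    have hS: "S n = S n' + (x n - c)" unfolding S_def n' by simp
    have pn: "0 < real n powr s" using n by simp
    have pn': "0 < real n' powr s" using n'1 by simp
    have le': "real n' powr s \<le> real n powr s"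
      using n' s by (intro powr_mono2) auto
    have a1: "\<bar>S n\<bar> < real n powr s / 8"
      using N[of n] n pn by (simp add: abs_divide abs_of_pos divide_less_eq)
    have a2: "\<bar>S n'\<bar> < real n' powr s / 8"
      using N[of n'] n'1 pn' by (simp add: abs_divide abs_of_pos divide_less_eq)
    have "8*\<bar>c\<bar>+1 = ((8*\<bar>c\<bar>+1) powr (1/s)) powr s"
      using s by (simp add: powr_powr)
    also have "\<dots> \<le> real N2 powr s"
      using N2 s by (intro powr_mono2) auto
    also have "\<dots> \<le> real n powr s"
      using n s by (intro powr_mono2) auto
    finally have a3: "8*\<bar>c\<bar>+1 \<le> real n powr s" .
    have "x n = c + S n - S n'" using hS by simp
    then have "\<bar>x n\<bar> \<le> \<bar>c\<bar> + \<bar>S n\<bar> + \<bar>S n'\<bar>" by linarith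
    then show ?thesis using a1 a2 a3 le' by linarith
  qed
  then show ?thesis by blast
qed

theorem theorem1:
  fixes M :: "'a measure" and X :: "nat \<Rightarrow> 'a \<Rightarrow> real" and p c :: real
  assumes "prob_space M"
    and "\<And>n. X n \<in> borel_measurable M"
    and "1 \<le> p" and "p < 2"
    and "\<And>n. 1 \<le> n \<Longrightarrow> distr M borel (X n) = distr M borel (X 1)"
    and "pairwise_PQD M X"
    and "AE \<omega> in M. (\<lambda>n. (\<Sum>k=1..n. (X k \<omega> - c)) / real n powr (1/p)) \<longlonglongrightarrow> 0"
    and "summable (\<lambda>j. \<Sum>k\<in>{1..<j}. (real k * real j) powr (-1/p)
            * G M (X k) (X j) (real k powr (1/p)) (real j powr (1/p)))"
  shows "summable (\<lambda>k. measure M {\<omega>\<in>space M. \<bar>X 1 \<omega>\<bar> > real (Suc k) powr (1/p)})"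
proof (rule ccontr)
  assume nsum: "\<not> ?thesis"
  note pM = assms(1)
  interpret prob_space M by (rule pM)
  note Xm[measurable] = assms(2)
  have p0: "0 < p" using assms(3) by simp
  define t where "t k = real k powr (1/p)" for k
  have t0: "t 0 = 0" by (simp add: t_def)
  have tnn: "0 \<le> t k" for k by (simp add: t_def)
  have tpos: "0 < t k" if "1 \<le> k" for k using that by (simp add: t_def)
  define Zp where "Zp k \<omega> = measure lborel {x\<in>{t k/2..t k}. X k \<omega> > x} / (t k/2)" for k \<omega>
  define Zn where "Zn k \<omega> = measure lborel {x\<in>{-t k..-(t k/2)}. X k \<omega> \<le> x} / (t k/2)" for k \<omega>
  have Zp_cf: "Zp k \<omega> = min (t k/2) (max 0 (X k \<omega> - t k/2)) / (t k/2)" for k \<omega>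
    unfolding Zp_def using meas_gt[of "t k/2" "t k" "X k \<omega>"] tnn[of k] by simp
  have Zn_cf: "Zn k \<omega> = min (t k/2) (max 0 (-(t k/2) - X k \<omega>)) / (t k/2)" for k \<omega>
    unfolding Zn_def using meas_le[of "t k/2" "t k" "X k \<omega>"] tnn[of k] by simp
  have Zpm[measurable]: "Zp k \<in> borel_measurable M" for k
    unfolding Zp_cf[abs_def] by measurable
  have Znm[measurable]: "Zn k \<in> borel_measurable M" for k
    unfolding Zn_cf[abs_def] by measurable
  have Zpb: "0 \<le> Zp k \<omega> \<and> Zp k \<omega> \<le> 1" for k \<omega>
  proof (cases "t k = 0")
    case True then show ?thesis by (simp add: Zp_cf)
  next
    case False then have "0 < t k" using tnn[of k] by simp
    then show ?thesis unfolding Zp_cf by (auto simp: divide_le_eq min_def max_def)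
  qed
  have Znb: "0 \<le> Zn k \<omega> \<and> Zn k \<omega> \<le> 1" for k \<omega>
  proof (cases "t k = 0")
    case True then show ?thesis by (simp add: Zn_cf)
  next
    case False then have "0 < t k" using tnn[of k] by simp
    then show ?thesis unfolding Zn_cf by (auto simp: divide_le_eq min_def max_def)
  qed
  have Zp0: "Zp 0 \<omega> = 0" for \<omega> by (simp add: Zp_cf t0)
  have Zn0: "Zn 0 \<omega> = 0" for \<omega> by (simp add: Zn_cf t0)
  define H where "H k j z = measure M {\<omega>\<in>space M. X k \<omega> > fst z \<and> X j \<omega> > snd z}
            - measure M {\<omega>\<in>space M. X k \<omega> > fst z} * measure M {\<omega>\<in>space M. X j \<omega> > snd z}" for k j z
  have GH: "G M (X k) (X j) u v = (LINT z:{-u..u}\<times>{-v..v}|lborel. H k j z)" for k j u v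
    unfolding G_def H_def ..
  have predgt: "Measurable.pred (borel \<Otimes>\<^sub>M borel) (\<lambda>p::real\<times>real. fst p > snd p)" by measurable
  have predle: "Measurable.pred (borel \<Otimes>\<^sub>M borel) (\<lambda>p::real\<times>real. fst p \<le> snd p)" by measurable
  have Hm': "H k j \<in> borel_measurable lborel" for k j
    unfolding H_def[abs_def] using Hm[OF pM Xm Xm predgt predgt] by simp
  have Hb: "\<bar>H k j z\<bar> \<le> 1" for k j z
  proof -
    have "0 \<le> measure M {\<omega>\<in>space M. X k \<omega> > fst z} * measure M {\<omega>\<in>space M. X j \<omega> > snd z}" by simp
    moreover have "measure M {\<omega>\<in>space M. X k \<omega> > fst z} * measure M {\<omega>\<in>space M. X j \<omega> > snd z} \<le> 1"
      by (intro mult_le_one) auto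
    moreover have "0 \<le> measure M {\<omega>\<in>space M. X k \<omega> > fst z \<and> X j \<omega> > snd z}"
      "measure M {\<omega>\<in>space M. X k \<omega> > fst z \<and> X j \<omega> > snd z} \<le> 1" by auto
    ultimately show ?thesis unfolding H_def by linarith
  qed
  have Hnn: "0 \<le> H k j z" if "1 \<le> k" "1 \<le> j" "k \<noteq> j" for k j z
    using assms(6) that pqd_ident[OF pM Xm[of k] Xm[of j], of "fst z" "snd z"]
    unfolding pairwise_PQD_def H_def by auto
  have Gnn: "0 \<le> G M (X k) (X j) u v" if "1 \<le> k" "1 \<le> j" "k \<noteq> j" for k j u v
    unfolding GH set_lebesgue_integral_def
    by (rule integral_nonneg_AE) (use Hnn[OF that] in \<open>auto split: split_indicator\<close>)
  have coef: "1 / ((t k/2) * (t j/2)) = 4 * ((real k * real j) powr (-1/p))" if "1 \<le> k" "1 \<le> j" for k j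
    using that by (simp add: t_def powr_mult powr_minus_divide divide_simps)
  have intZp: "integrable M (Zp k)" for k
    by (rule integrable_const_bound[where B=1]) (use Zpb in auto)
  have intZn: "integrable M (Zn k)" for k
    by (rule integrable_const_bound[where B=1]) (use Znb in auto)
  have covp: "(\<integral>\<omega>. Zp k \<omega> * Zp j \<omega> \<partial>M) - (\<integral>\<omega>. Zp k \<omega> \<partial>M) * (\<integral>\<omega>. Zp j \<omega> \<partial>M)
      \<le> 4 * ((real k * real j) powr (-1/p)) * G M (X k) (X j) (t k) (t j)"
    if kj: "1 \<le> k" "k < j" for k j
  proof -
    have j1: "1 \<le> j" using kj by simp
    define F where "F i \<omega> = measure lborel {x\<in>{t i/2..t i}. X i \<omega> > x}" for i \<omega>
    have cr: "(\<integral>\<omega>. F k \<omega> * F j \<omega> \<partial>M) - (\<integral>\<omega>. F k \<omega> \<partial>M) * (\<integral>\<omega>. F j \<omega> \<partial>M)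
        = (LINT z:{t k/2..t k}\<times>{t j/2..t j}|lborel. H k j z)"
      unfolding F_def H_def by (rule cov_repr[OF pM Xm[of k] Xm[of j] predgt predgt])
    have "(LINT z:{t k/2..t k}\<times>{t j/2..t j}|lborel. H k j z) \<le> (LINT z:{-t k..t k}\<times>{-t j..t j}|lborel. H k j z)"
      by (rule box_mono[OF Hm' Hb]) (use tnn Hnn[of k j] kj j1 in auto)
    also have "\<dots> = G M (X k) (X j) (t k) (t j)" by (simp add: GH)
    finally have le: "(\<integral>\<omega>. F k \<omega> * F j \<omega> \<partial>M) - (\<integral>\<omega>. F k \<omega> \<partial>M) * (\<integral>\<omega>. F j \<omega> \<partial>M) \<le> G M (X k) (X j) (t k) (t j)"
      using cr by simp
    have eq: "(\<integral>\<omega>. Zp k \<omega> * Zp j \<omega> \<partial>M) - (\<integral>\<omega>. Zp k \<omega> \<partial>M) * (\<integral>\<omega>. Zp j \<omega> \<partial>M)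
        = ((\<integral>\<omega>. F k \<omega> * F j \<omega> \<partial>M) - (\<integral>\<omega>. F k \<omega> \<partial>M) * (\<integral>\<omega>. F j \<omega> \<partial>M)) * (1 / ((t k/2) * (t j/2)))"
    proof -
      have ZF: "Zp i \<omega> = F i \<omega> / (t i/2)" for i \<omega> by (simp add: Zp_def F_def)
      have e1: "(\<integral>\<omega>. Zp k \<omega> * Zp j \<omega> \<partial>M) = (\<integral>\<omega>. F k \<omega> * F j \<omega> \<partial>M) / ((t k/2) * (t j/2))"
      proof -
        have "(\<integral>\<omega>. Zp k \<omega> * Zp j \<omega> \<partial>M) = (\<integral>\<omega>. (F k \<omega> * F j \<omega>) / ((t k/2) * (t j/2)) \<partial>M)"
          by (rule Bochner_Integration.integral_cong[OF refl]) (simp add: ZF)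
        also have "\<dots> = (\<integral>\<omega>. F k \<omega> * F j \<omega> \<partial>M) / ((t k/2) * (t j/2))"
          by (rule integral_divide_zero)
        finally show ?thesis .
      qed
      have e2: "(\<integral>\<omega>. Zp i \<omega> \<partial>M) = (\<integral>\<omega>. F i \<omega> \<partial>M) / (t i/2)" for i
      proof -
        have "(\<integral>\<omega>. Zp i \<omega> \<partial>M) = (\<integral>\<omega>. F i \<omega> / (t i/2) \<partial>M)"
          by (rule Bochner_Integration.integral_cong[OF refl]) (simp add: ZF)
        also have "\<dots> = (\<integral>\<omega>. F i \<omega> \<partial>M) / (t i/2)"
          by (rule integral_divide_zero)
        finally show ?thesis .
      qed
      show ?thesis unfolding e1 e2 by (simp add: diff_divide_distrib)
    qed
    have cpos: "0 < 1 / ((t k/2) * (t j/2))" using tpos[OF kj(1)] tpos[OF j1] by simp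
    show ?thesis
      unfolding eq coef[OF kj(1) j1]
      using mult_right_mono[OF le, of "4 * ((real k * real j) powr (-1/p))"] by (simp add: ac_simps)
  qed
  have covn: "(\<integral>\<omega>. Zn k \<omega> * Zn j \<omega> \<partial>M) - (\<integral>\<omega>. Zn k \<omega> \<partial>M) * (\<integral>\<omega>. Zn j \<omega> \<partial>M)
      \<le> 4 * ((real k * real j) powr (-1/p)) * G M (X k) (X j) (t k) (t j)"
    if kj: "1 \<le> k" "k < j" for k j
  proof -
    have j1: "1 \<le> j" using kj by simp
    define F where "F i \<omega> = measure lborel {x\<in>{-t i..-(t i/2)}. X i \<omega> \<le> x}" for i \<omega>
    have cr: "(\<integral>\<omega>. F k \<omega> * F j \<omega> \<partial>M) - (\<integral>\<omega>. F k \<omega> \<partial>M) * (\<integral>\<omega>. F j \<omega> \<partial>M)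
        = (LINT z:{-t k..-(t k/2)}\<times>{-t j..-(t j/2)}|lborel.
             measure M {\<omega>\<in>space M. X k \<omega> \<le> fst z \<and> X j \<omega> \<le> snd z}
            - measure M {\<omega>\<in>space M. X k \<omega> \<le> fst z} * measure M {\<omega>\<in>space M. X j \<omega> \<le> snd z})"
      unfolding F_def by (rule cov_repr[OF pM Xm[of k] Xm[of j] predle predle])
    also have "\<dots> = (LINT z:{-t k..-(t k/2)}\<times>{-t j..-(t j/2)}|lborel. H k j z)"
      unfolding set_lebesgue_integral_def H_def
      by (rule Bochner_Integration.integral_cong[OF refl]) (simp add: pqd_ident[OF pM Xm Xm])
    also have "\<dots> \<le> (LINT z:{-t k..t k}\<times>{-t j..t j}|lborel. H k j z)"
      by (rule box_mono[OF Hm' Hb]) (use tnn Hnn[of k j] kj j1 in auto)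
    also have "\<dots> = G M (X k) (X j) (t k) (t j)" by (simp add: GH)
    finally have le: "(\<integral>\<omega>. F k \<omega> * F j \<omega> \<partial>M) - (\<integral>\<omega>. F k \<omega> \<partial>M) * (\<integral>\<omega>. F j \<omega> \<partial>M) \<le> G M (X k) (X j) (t k) (t j)" .
    have eq: "(\<integral>\<omega>. Zn k \<omega> * Zn j \<omega> \<partial>M) - (\<integral>\<omega>. Zn k \<omega> \<partial>M) * (\<integral>\<omega>. Zn j \<omega> \<partial>M)
        = ((\<integral>\<omega>. F k \<omega> * F j \<omega> \<partial>M) - (\<integral>\<omega>. F k \<omega> \<partial>M) * (\<integral>\<omega>. F j \<omega> \<partial>M)) * (1 / ((t k/2) * (t j/2)))"
    proof -
      have ZF: "Zn i \<omega> = F i \<omega> / (t i/2)" for i \<omega> by (simp add: Zn_def F_def)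
      have e1: "(\<integral>\<omega>. Zn k \<omega> * Zn j \<omega> \<partial>M) = (\<integral>\<omega>. F k \<omega> * F j \<omega> \<partial>M) / ((t k/2) * (t j/2))"
      proof -
        have "(\<integral>\<omega>. Zn k \<omega> * Zn j \<omega> \<partial>M) = (\<integral>\<omega>. (F k \<omega> * F j \<omega>) / ((t k/2) * (t j/2)) \<partial>M)"
          by (rule Bochner_Integration.integral_cong[OF refl]) (simp add: ZF)
        also have "\<dots> = (\<integral>\<omega>. F k \<omega> * F j \<omega> \<partial>M) / ((t k/2) * (t j/2))"
          by (rule integral_divide_zero)
        finally show ?thesis .
      qed
      have e2: "(\<integral>\<omega>. Zn i \<omega> \<partial>M) = (\<integral>\<omega>. F i \<omega> \<partial>M) / (t i/2)" for i
      proof -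
        have "(\<integral>\<omega>. Zn i \<omega> \<partial>M) = (\<integral>\<omega>. F i \<omega> / (t i/2) \<partial>M)"
          by (rule Bochner_Integration.integral_cong[OF refl]) (simp add: ZF)
        also have "\<dots> = (\<integral>\<omega>. F i \<omega> \<partial>M) / (t i/2)"
          by (rule integral_divide_zero)
        finally show ?thesis .
      qed
      show ?thesis unfolding e1 e2 by (simp add: diff_divide_distrib)
    qed
    have cpos: "0 < 1 / ((t k/2) * (t j/2))" using tpos[OF kj(1)] tpos[OF j1] by simp
    show ?thesis
      unfolding eq coef[OF kj(1) j1]
      using mult_right_mono[OF le, of "4 * ((real k * real j) powr (-1/p))"] by (simp add: ac_simps)
  qed
  define g where "g j = (\<Sum>k\<in>{1..<j}. (real k * real j) powr (-1/p)
            * G M (X k) (X j) (real k powr (1/p)) (real j powr (1/p)))" for j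
  have gsum: "summable g" using assms(8) unfolding g_def[abs_def] .
  have gnn: "0 \<le> g j" for j
    unfolding g_def by (intro sum_nonneg mult_nonneg_nonneg Gnn) auto
  have Cbound: "(\<Sum>j<n. \<Sum>k<j. (\<integral>\<omega>. Z k \<omega> * Z j \<omega> \<partial>M) - (\<integral>\<omega>. Z k \<omega> \<partial>M) * (\<integral>\<omega>. Z j \<omega> \<partial>M)) \<le> 4 * suminf g"
    if cz: "\<And>k j. 1 \<le> k \<Longrightarrow> k < j \<Longrightarrow> (\<integral>\<omega>. Z k \<omega> * Z j \<omega> \<partial>M) - (\<integral>\<omega>. Z k \<omega> \<partial>M) * (\<integral>\<omega>. Z j \<omega> \<partial>M)
              \<le> 4 * ((real k * real j) powr (-1/p)) * G M (X k) (X j) (t k) (t j)"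
      and z0: "\<And>\<omega>. Z 0 \<omega> = 0" for Z :: "nat \<Rightarrow> 'a \<Rightarrow> real" and n
  proof -
    let ?c = "\<lambda>k j. (\<integral>\<omega>. Z k \<omega> * Z j \<omega> \<partial>M) - (\<integral>\<omega>. Z k \<omega> \<partial>M) * (\<integral>\<omega>. Z j \<omega> \<partial>M)"
    have row: "(\<Sum>k<j. ?c k j) \<le> 4 * g j" for j
    proof (cases "j = 0")
      case True then show ?thesis by (simp add: g_def)
    next
      case False
      have "(\<Sum>k<j. ?c k j) = (\<Sum>k\<in>{0..<j}. ?c k j)" by (simp add: atLeast0LessThan)
      also have "\<dots> = ?c 0 j + (\<Sum>k\<in>{1..<j}. ?c k j)"
        using False by (subst sum.atLeast_Suc_lessThan) auto
      also have "?c 0 j = 0" by (simp add: z0)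
      also have "(\<Sum>k\<in>{1..<j}. ?c k j) \<le> (\<Sum>k\<in>{1..<j}. 4 * ((real k * real j) powr (-1/p) * G M (X k) (X j) (t k) (t j)))"
        by (intro sum_mono) (use cz in \<open>auto simp: mult.assoc\<close>)
      also have "\<dots> = 4 * g j" by (simp add: g_def t_def sum_distrib_left)
      finally show ?thesis by simp
    qed
    have "(\<Sum>j<n. \<Sum>k<j. ?c k j) \<le> (\<Sum>j<n. 4 * g j)" by (intro sum_mono row)
    also have "\<dots> = 4 * (\<Sum>j<n. g j)" by (simp add: sum_distrib_left)
    also have "\<dots> \<le> 4 * suminf g"
      using sum_le_suminf[OF gsum, of "{..<n}"] gnn by simp
    finally show ?thesis .
  qed
  have aeZ: "AE \<omega> in M. \<exists>m. \<forall>k\<ge>m. Zp k \<omega> = 0 \<and> Zn k \<omega> = 0"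
    using assms(7)
  proof eventually_elim
    case (elim \<omega>)
    obtain m where m: "\<And>k. k \<ge> m \<Longrightarrow> \<bar>X k \<omega>\<bar> < real k powr (1/p) / 2"
      using conv[of "1/p" "\<lambda>k. X k \<omega>" c] elim p0 by auto
    have "Zp k \<omega> = 0 \<and> Zn k \<omega> = 0" if "k \<ge> m" for k
    proof -
      have "\<bar>X k \<omega>\<bar> < t k / 2" using m[OF that] by (simp add: t_def)
      then show ?thesis using tnn[of k] by (simp add: Zp_cf Zn_cf)
    qed
    then show ?case by blast
  qed
  have aep: "AE \<omega> in M. \<exists>m. \<forall>k\<ge>m. Zp k \<omega> = 0" using aeZ by eventually_elim auto
  have aen: "AE \<omega> in M. \<exists>m. \<forall>k\<ge>m. Zn k \<omega> = 0" using aeZ by eventually_elim auto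
  have dist_eq: "measure M {\<omega>\<in>space M. X k \<omega> \<in> A} = measure M {\<omega>\<in>space M. X 1 \<omega> \<in> A}"
    if "1 \<le> k" "A \<in> sets borel" for k A
  proof -
    have "measure M {\<omega>\<in>space M. X i \<omega> \<in> A} = measure (distr M borel (X i)) A" for i
      using measure_distr[OF Xm[of i] that(2)] by (simp add: vimage_def Int_def conj_commute)
    then show ?thesis using assms(5)[OF that(1)] by simp
  qed
  have lbp: "measure M {\<omega>\<in>space M. X k \<omega> \<in> {t k<..}} \<le> (\<integral>\<omega>. Zp k \<omega> \<partial>M)" if k1: "1 \<le> k" for k
  proof -
    have "measure M {\<omega>\<in>space M. X k \<omega> \<in> {t k<..}} = (\<integral>\<omega>. indicator {\<omega>\<in>space M. X k \<omega> \<in> {t k<..}} \<omega> \<partial>M)"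
      by (simp add: Int_absorb2)
    also have "\<dots> \<le> (\<integral>\<omega>. Zp k \<omega> \<partial>M)"
    proof (rule integral_mono[OF _ intZp])
      show "integrable M (indicator {\<omega>\<in>space M. X k \<omega> \<in> {t k<..}} :: 'a \<Rightarrow> real)"
        by (rule integrable_real_indicator) (auto simp: less_top[symmetric])
      fix \<omega> assume "\<omega> \<in> space M"
      show "indicator {\<omega>\<in>space M. X k \<omega> \<in> {t k<..}} \<omega> \<le> Zp k \<omega>"
        using tpos[OF k1] Zpb[of k \<omega>] by (auto simp: Zp_cf split: split_indicator)
    qed
    finally show ?thesis .
  qed
  have lbn: "measure M {\<omega>\<in>space M. X k \<omega> \<in> {..< -t k}} \<le> (\<integral>\<omega>. Zn k \<omega> \<partial>M)" if k1: "1 \<le> k" for k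
  proof -
    have "measure M {\<omega>\<in>space M. X k \<omega> \<in> {..< -t k}} = (\<integral>\<omega>. indicator {\<omega>\<in>space M. X k \<omega> \<in> {..< -t k}} \<omega> \<partial>M)"
      by (simp add: Int_absorb2)
    also have "\<dots> \<le> (\<integral>\<omega>. Zn k \<omega> \<partial>M)"
    proof (rule integral_mono[OF _ intZn])
      show "integrable M (indicator {\<omega>\<in>space M. X k \<omega> \<in> {..< -t k}} :: 'a \<Rightarrow> real)"
        by (rule integrable_real_indicator) (auto simp: less_top[symmetric])
      fix \<omega> assume "\<omega> \<in> space M"
      show "indicator {\<omega>\<in>space M. X k \<omega> \<in> {..< -t k}} \<omega> \<le> Zn k \<omega>"
        using tpos[OF k1] Znb[of k \<omega>] by (auto simp: Zn_cf split: split_indicator)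
    qed
    finally show ?thesis .
  qed
  have lb: "measure M {\<omega>\<in>space M. \<bar>X 1 \<omega>\<bar> > real (Suc k) powr (1/p)}
      \<le> (\<integral>\<omega>. Zp (Suc k) \<omega> \<partial>M) + (\<integral>\<omega>. Zn (Suc k) \<omega> \<partial>M)" for k
  proof -
    let ?t = "t (Suc k)"
    have "measure M {\<omega>\<in>space M. \<bar>X 1 \<omega>\<bar> > real (Suc k) powr (1/p)}
        \<le> measure M ({\<omega>\<in>space M. X 1 \<omega> \<in> {?t<..}} \<union> {\<omega>\<in>space M. X 1 \<omega> \<in> {..< -?t}})"
      by (rule finite_measure_mono) (auto simp: t_def)
    also have "\<dots> \<le> measure M {\<omega>\<in>space M. X 1 \<omega> \<in> {?t<..}} + measure M {\<omega>\<in>space M. X 1 \<omega> \<in> {..< -?t}}"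
      by (rule measure_Un_le) auto
    also have "\<dots> = measure M {\<omega>\<in>space M. X (Suc k) \<omega> \<in> {?t<..}} + measure M {\<omega>\<in>space M. X (Suc k) \<omega> \<in> {..< -?t}}"
      using dist_eq[of "Suc k" "{?t<..}"] dist_eq[of "Suc k" "{..< -?t}"] by simp
    also have "\<dots> \<le> (\<integral>\<omega>. Zp (Suc k) \<omega> \<partial>M) + (\<integral>\<omega>. Zn (Suc k) \<omega> \<partial>M)"
      by (intro add_mono lbp lbn) auto
    finally show ?thesis .
  qed
  show False
  proof (cases "summable (\<lambda>k. \<integral>\<omega>. Zp k \<omega> \<partial>M) \<and> summable (\<lambda>k. \<integral>\<omega>. Zn k \<omega> \<partial>M)")
    case True
    then have "summable (\<lambda>k. (\<integral>\<omega>. Zp (Suc k) \<omega> \<partial>M) + (\<integral>\<omega>. Zn (Suc k) \<omega> \<partial>M))"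
      using summable_Suc_iff[of "\<lambda>k. \<integral>\<omega>. Zp k \<omega> \<partial>M"] summable_Suc_iff[of "\<lambda>k. \<integral>\<omega>. Zn k \<omega> \<partial>M"]
      by (intro summable_add) auto
    then have "summable (\<lambda>k. measure M {\<omega>\<in>space M. \<bar>X 1 \<omega>\<bar> > real (Suc k) powr (1/p)})"
    proof (rule summable_comparison_test'[where N=0])
      fix n :: nat
      show "norm (measure M {\<omega>\<in>space M. \<bar>X 1 \<omega>\<bar> > real (Suc n) powr (1/p)})
          \<le> (\<integral>\<omega>. Zp (Suc n) \<omega> \<partial>M) + (\<integral>\<omega>. Zn (Suc n) \<omega> \<partial>M)"
        using lb[of n] by (simp only: real_norm_def abs_of_nonneg measure_nonneg)
    qed
    with nsum show False by simp
  next
    case False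
    then have "\<not> summable (\<lambda>k. \<integral>\<omega>. Zp k \<omega> \<partial>M) \<or> \<not> summable (\<lambda>k. \<integral>\<omega>. Zn k \<omega> \<partial>M)" by blast
    then show False
    proof
      assume ns: "\<not> summable (\<lambda>k. \<integral>\<omega>. Zp k \<omega> \<partial>M)"
      show False
      proof (rule bc2[OF pM Zpm _ ns _ aep])
        fix n
        show "(\<Sum>j<n. \<Sum>k<j. (\<integral>\<omega>. Zp k \<omega> * Zp j \<omega> \<partial>M) - (\<integral>\<omega>. Zp k \<omega> \<partial>M) * (\<integral>\<omega>. Zp j \<omega> \<partial>M)) \<le> 4 * suminf g"
          by (rule Cbound) (use covp Zp0 in auto)
      qed (use Zpb in auto)
    next
      assume ns: "\<not> summable (\<lambda>k. \<integral>\<omega>. Zn k \<omega> \<partial>M)"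
      show False
      proof (rule bc2[OF pM Znm _ ns _ aen])
        fix n
        show "(\<Sum>j<n. \<Sum>k<j. (\<integral>\<omega>. Zn k \<omega> * Zn j \<omega> \<partial>M) - (\<integral>\<omega>. Zn k \<omega> \<partial>M) * (\<integral>\<omega>. Zn j \<omega> \<partial>M)) \<le> 4 * suminf g"
          by (rule Cbound) (use covn Zn0 in auto)
      qed (use Znb in auto)
    qed
  qed
qed

end
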